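(* Let $q\in\mathbb{C}\setminus\{0\}$ be not a root of unity, and let $\pi$ be a $U_q(\mathfrak{sl}_2)$-module algebra structure on $\mathbb{C}_q[x^{\pm1},y^{\pm1}]$ such that $\pi(\mathsf{k})(x)=\alpha x$, $\pi(\mathsf{k})(y)=\beta y$ with $\alpha,\beta\in\mathbb{C}\setminus\{0\}$, and write (finite sums) $$\pi(\mathsf{e})(x)=\sum_{i,j}a_{i,j}x^iy^j,\quad \pi(\mathsf{e})(y)=\sum_{i,j}b_{i,j}x^iy^j,\quad \pi(\mathsf{f})(x)=\sum_{i,j}c_{i,j}x^iy^j,\quad \pi(\mathsf{f})(y)=\sum_{i,j}d_{i,j}x^iy^j,$$ with $a_{i,j},b_{i,j},c_{i,j},d_{i,j}\in\mathbb{C}$. Then for all $i,j\in\mathbb{Z}$, $$a_{i+1,j}(q^i-\beta)=b_{i,j+1}(1-\alpha q^j),\qquad c_{i+1,j}(1-\beta^{-1}q^i)=d_{i,j+1}(q^j-\alpha^{-1}).$$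
   Context: $\mathbb{C}_q[x^{\pm1},y^{\pm1}]$ is the unital algebra generated by $x,y,x^{-1},y^{-1}$ with relations $yx=qxy$, $xx^{-1}=x^{-1}x=yy^{-1}=y^{-1}y=\mathbf{1}$; the monomials $x^iy^j$, $i,j\in\mathbb{Z}$, form a basis. $U_q(\mathfrak{sl}_2)$ is the unital algebra generated by $\mathsf{k},\mathsf{k}^{-1},\mathsf{e},\mathsf{f}$ with relations $\mathsf{k}\mathsf{k}^{-1}=\mathsf{k}^{-1}\mathsf{k}=\mathbf{1}$, $\mathsf{k}\mathsf{e}=q^2\mathsf{e}\mathsf{k}$, $\mathsf{k}\mathsf{f}=q^{-2}\mathsf{f}\mathsf{k}$, $\mathsf{e}\mathsf{f}-\mathsf{f}\mathsf{e}=\frac{\mathsf{k}-\mathsf{k}^{-1}}{q-q^{-1}}$, with Hopf structure $\Delta(\mathsf{k})=\mathsf{k}\otimes\mathsf{k}$, $\Delta(\mathsf{e})=\mathbf{1}\otimes\mathsf{e}+\mathsf{e}\otimes\mathsf{k}$, $\Delta(\mathsf{f})=\mathsf{f}\otimes\mathbf{1}+\mathsf{k}^{-1}\otimes\mathsf{f}$, $\varepsilon(\mathsf{k})=1$, $\varepsilon(\mathsf{e})=\varepsilon(\mathsf{f})=0$. A $U_q(\mathfrak{sl}_2)$-module algebra structure on a unital algebra $A$ is an algebra homomorphism $\pi:U_q(\mathfrak{sl}_2)\to\operatorname{End}_\mathbb{C}A$ with $\pi(h)(ab)=\sum_i\pi(h_i')(a)\pi(h_i'')(b)$ (where $\Delta(h)=\sum_i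 h_i'\otimes h_i''$) and $\pi(h)(\mathbf{1})=\varepsilon(h)\mathbf{1}$. *)

theory Defs
  imports Complex_Main "HOL-Library.Poly_Mapping"
begin

text \<open>The quantum torus C_q[x^{+-1},y^{+-1}]: an element is a finitely supported
  coefficient function on the basis monomials x^i y^j, (i,j) in Z x Z.\<close>

type_synonym qtorus = "(int \<times> int) \<Rightarrow>\<^sub>0 complex"

definition qmono :: "int \<Rightarrow> int \<Rightarrow> qtorus" where
  "qmono i j = Poly_Mapping.single (i, j) 1"

definition qone :: qtorus where "qone = qmono 0 0"
definition qx :: qtorus where "qx = qmono 1 0"
definition qy :: qtorus where "qy = qmono 0 1"

definition qsmult :: "complex \<Rightarrow> qtorus \<Rightarrow> qtorus" where
  "qsmult c a = Poly_Mapping.map (\<lambda>v. c * v) a"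

text \<open>Multiplication: (x^i y^j)(x^k y^l) = q^(j k) x^(i+k) y^(j+l), from y x = q x y.\<close>
definition qmult :: "complex \<Rightarrow> qtorus \<Rightarrow> qtorus \<Rightarrow> qtorus" where
  "qmult q a b = (\<Sum>(i, j)\<in>Poly_Mapping.keys a. \<Sum>(k, l)\<in>Poly_Mapping.keys b.
      Poly_Mapping.single (i + k, j + l) (Poly_Mapping.lookup a (i, j) * Poly_Mapping.lookup b (k, l) * q powi (j * k)))"

definition qlinear :: "(qtorus \<Rightarrow> qtorus) \<Rightarrow> bool" where
  "qlinear T \<longleftrightarrow> (\<forall>a b. T (a + b) = T a + T b) \<and> (\<forall>c a. T (qsmult c a) = qsmult c (T a))"

text \<open>A U_q(sl_2)-module algebra structure on the quantum torus, given by the images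
  K = pi(k), Ki = pi(k^{-1}), E = pi(e), F = pi(f) of the generators: linear maps
  satisfying the defining relations of U_q(sl_2) (so that they define an algebra
  homomorphism U_q(sl_2) -> End A), together with the compatibility with
  multiplication and unit on the generators (via Delta and epsilon).\<close>
definition module_algebra ::
  "complex \<Rightarrow> (qtorus \<Rightarrow> qtorus) \<Rightarrow> (qtorus \<Rightarrow> qtorus) \<Rightarrow> (qtorus \<Rightarrow> qtorus) \<Rightarrow> (qtorus \<Rightarrow> qtorus) \<Rightarrow> bool"
where
  "module_algebra q K Ki E F \<longleftrightarrow>
     qlinear K \<and> qlinear Ki \<and> qlinear E \<and> qlinear F \<and>
     (\<forall>a. K (Ki a) = a) \<and> (\<forall>a. Ki (K a) = a) \<and>
     (\<forall>a. K (E a) = qsmult (q ^ 2) (E (K a))) \<and>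
     (\<forall>a. K (F a) = qsmult (inverse q ^ 2) (F (K a))) \<and>
     (\<forall>a. E (F a) - F (E a) = qsmult (1 / (q - inverse q)) (K a - Ki a)) \<and>
     (\<forall>a b. K (qmult q a b) = qmult q (K a) (K b)) \<and>
     (\<forall>a b. Ki (qmult q a b) = qmult q (Ki a) (Ki b)) \<and>
     (\<forall>a b. E (qmult q a b) = qmult q a (E b) + qmult q (E a) (K b)) \<and>
     (\<forall>a b. F (qmult q a b) = qmult q (F a) b + qmult q (Ki a) (F b)) \<and>
     K qone = qone \<and> Ki qone = qone \<and> E qone = 0 \<and> F qone = 0"

end

theory Submission
  imports Defs
begin

lemma lookup_qsmult: "Poly_Mapping.lookup (qsmult c a) k = c * Poly_Mapping.lookup a k"
  by (simp add: qsmult_def Poly_Mapping.map.rep_eq when_def)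

lemma lookup_qmult_left:
  "Poly_Mapping.lookup (qmult q (Poly_Mapping.single (a, b) c) p) (m, n) =
     c * Poly_Mapping.lookup p (m - a, n - b) * q powi (b * (m - a))"
proof (cases "c = 0")
  case True thus ?thesis by (simp add: qmult_def)
next
  case False
  have "Poly_Mapping.lookup (qmult q (Poly_Mapping.single (a, b) c) p) (m, n) =
     (\<Sum>x\<in>Poly_Mapping.keys p. if x = (m - a, n - b) then c * Poly_Mapping.lookup p x * q powi (b * fst x) else 0)"
    unfolding qmult_def using False
    by (auto simp: lookup_sum lookup_single when_def case_prod_beta prod_eq_iff intro!: sum.cong)
  also have "\<dots> = c * Poly_Mapping.lookup p (m - a, n - b) * q powi (b * (m - a))"
    by (subst sum.delta) (auto simp: in_keys_iff simp del: prod.inject)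
  finally show ?thesis .
qed

lemma lookup_qmult_right:
  "Poly_Mapping.lookup (qmult q p (Poly_Mapping.single (a, b) c)) (m, n) =
     c * Poly_Mapping.lookup p (m - a, n - b) * q powi ((n - b) * a)"
proof (cases "c = 0")
  case True thus ?thesis by (simp add: qmult_def)
next
  case False
  have "Poly_Mapping.lookup (qmult q p (Poly_Mapping.single (a, b) c)) (m, n) =
     (\<Sum>x\<in>Poly_Mapping.keys p. if x = (m - a, n - b) then c * Poly_Mapping.lookup p x * q powi (snd x * a) else 0)"
    unfolding qmult_def using False
    by (auto simp: lookup_sum lookup_single when_def case_prod_beta prod_eq_iff intro!: sum.cong)
  also have "\<dots> = c * Poly_Mapping.lookup p (m - a, n - b) * q powi ((n - b) * a)"
    by (subst sum.delta) (auto simp: in_keys_iff simp del: prod.inject)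
  finally show ?thesis .
qed

lemma qsmult_qmono: "qsmult c (qmono a b) = Poly_Mapping.single (a, b) c"
  by (rule poly_mapping_eqI) (simp add: lookup_qsmult qmono_def lookup_single when_def)

lemma qyx: "qmult q qy qx = qsmult q (qmult q qx qy)"
  unfolding qmult_def qx_def qy_def qmono_def qsmult_def
  by (simp add: Poly_Mapping.map_single)

theorem lemma5:
  fixes q \<alpha> \<beta> :: complex and K Ki E F :: "qtorus \<Rightarrow> qtorus"
  assumes "q \<noteq> 0"
    and "\<forall>n::nat. n > 0 \<longrightarrow> q ^ n \<noteq> 1"
    and "module_algebra q K Ki E F"
    and "\<alpha> \<noteq> 0" and "\<beta> \<noteq> 0"
    and "K qx = qsmult \<alpha> qx" and "K qy = qsmult \<beta> qy"
  shows "\<forall>i j :: int.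
     Poly_Mapping.lookup (E qx) (i + 1, j) * (q powi i - \<beta>) = Poly_Mapping.lookup (E qy) (i, j + 1) * (1 - \<alpha> * q powi j)
   \<and> Poly_Mapping.lookup (F qx) (i + 1, j) * (1 - inverse \<beta> * q powi i) = Poly_Mapping.lookup (F qy) (i, j + 1) * (q powi j - inverse \<alpha>)"
proof (intro allI)
  fix i j :: int
  note M = assms(3)[unfolded module_algebra_def qlinear_def]
  have Kx: "K qx = Poly_Mapping.single (1,0) \<alpha>" and Ky: "K qy = Poly_Mapping.single (0,1) \<beta>"
    using assms(6,7) by (simp_all add: qsmult_qmono qx_def qy_def)
  have "Ki (K qx) = qx" using M by blast
  hence "qsmult \<alpha> (Ki qx) = qx" using M assms(6) by metis
  hence Kix: "Ki qx = Poly_Mapping.single (1,0) (inverse \<alpha>)"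
    using assms(4)
    by (intro poly_mapping_eqI) (metis (no_types, lifting) lookup_qsmult qx_def qsmult_qmono mult.left_neutral
        nonzero_eq_divide_eq divide_inverse_commute mult.commute)
  have "Ki (K qy) = qy" using M by blast
  hence "qsmult \<beta> (Ki qy) = qy" using M assms(7) by metis
  hence Kiy: "Ki qy = Poly_Mapping.single (0,1) (inverse \<beta>)"
    using assms(5)
    by (intro poly_mapping_eqI) (metis (no_types, lifting) lookup_qsmult qy_def qsmult_qmono mult.left_neutral
        nonzero_eq_divide_eq divide_inverse_commute mult.commute)
  have Eq1: "qmult q qy (E qx) + qmult q (E qy) (K qx) = qsmult q (qmult q qx (E qy) + qmult q (E qx) (K qy))"
  proof -
    have "E (qmult q qy qx) = E (qsmult q (qmult q qx qy))" by (simp add: qyx)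
    thus ?thesis using M by metis
  qed
  have Eq2: "qmult q (F qy) qx + qmult q (Ki qy) (F qx) = qsmult q (qmult q (F qx) qy + qmult q (Ki qx) (F qy))"
  proof -
    have "F (qmult q qy qx) = F (qsmult q (qmult q qx qy))" by (simp add: qyx)
    thus ?thesis using M by metis
  qed
  have qi: "q powi (i + 1) = q powi i * q" and qj: "q powi (j + 1) = q powi j * q"
    using assms(1) by (simp_all add: power_int_add)
  have e1: "Poly_Mapping.lookup (E qx) (i + 1, j) * q powi (i+1) + \<alpha> * Poly_Mapping.lookup (E qy) (i, j + 1) * q powi (j+1)
      = q * (Poly_Mapping.lookup (E qy) (i, j + 1) + \<beta> * Poly_Mapping.lookup (E qx) (i + 1, j))"
    using arg_cong[OF Eq1[unfolded Kx Ky], of "\<lambda>p. Poly_Mapping.lookup p (i+1, j+1)"]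
    by (simp add: lookup_add lookup_qsmult Kx Ky lookup_qmult_left lookup_qmult_right qx_def qy_def qmono_def)
  have e2: "Poly_Mapping.lookup (F qy) (i, j + 1) * q powi (j+1) + inverse \<beta> * Poly_Mapping.lookup (F qx) (i + 1, j) * q powi (i+1)
      = q * (Poly_Mapping.lookup (F qx) (i + 1, j) + inverse \<alpha> * Poly_Mapping.lookup (F qy) (i, j + 1))"
    using arg_cong[OF Eq2[unfolded Kix Kiy], of "\<lambda>p. Poly_Mapping.lookup p (i+1, j+1)"]
    by (simp add: lookup_add lookup_qsmult Kix Kiy lookup_qmult_left lookup_qmult_right qx_def qy_def qmono_def)
  show "Poly_Mapping.lookup (E qx) (i + 1, j) * (q powi i - \<beta>) = Poly_Mapping.lookup (E qy) (i, j + 1) * (1 - \<alpha> * q powi j)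
   \<and> Poly_Mapping.lookup (F qx) (i + 1, j) * (1 - inverse \<beta> * q powi i) = Poly_Mapping.lookup (F qy) (i, j + 1) * (q powi j - inverse \<alpha>)"
  proof
    have "q * (Poly_Mapping.lookup (E qx) (i + 1, j) * (q powi i - \<beta>)) = q * (Poly_Mapping.lookup (E qy) (i, j + 1) * (1 - \<alpha> * q powi j))"
      using e1 unfolding qi qj by (simp add: algebra_simps)
    thus "Poly_Mapping.lookup (E qx) (i + 1, j) * (q powi i - \<beta>) = Poly_Mapping.lookup (E qy) (i, j + 1) * (1 - \<alpha> * q powi j)"
      using assms(1) by simp
  next
    have "q * (Poly_Mapping.lookup (F qx) (i + 1, j) * (1 - inverse \<beta> * q powi i)) = q * (Poly_Mapping.lookup (F qy) (i, j + 1) * (q powi j - inverse \<alpha>))"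
      using e2 unfolding qi qj by (simp add: algebra_simps)
    thus "Poly_Mapping.lookup (F qx) (i + 1, j) * (1 - inverse \<beta> * q powi i) = Poly_Mapping.lookup (F qy) (i, j + 1) * (q powi j - inverse \<alpha>)"
      using assms(1) by simp
  qed
qed

end
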